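(* Let $G$ be the plane graph with nodes at the points $u_1=(0,2)$, $s_1=(1,2)$, $l_1=(2,0)$, $h_1=(2,4)$, $s_2=(3,2)$, $u_2=(4,2)$, $v_1=(6,2)$, $t_1=(7,2)$, $l_2=(8,0)$, $h_2=(8,4)$, $t_2=(9,2)$, $v_2=(10,2)$ and straight-line edges $l_1l_2$, $h_1h_2$, $l_1u_1$, $l_1u_2$, $h_1u_1$, $h_1u_2$, $l_2v_1$, $l_2v_2$, $h_2v_1$, $h_2v_2$, $s_1u_1$, $s_2u_2$, $t_1v_1$, $t_2v_2$, all of capacity $1$, and let $H$ consist of the two demands $s_1t_1$ and $s_2t_2$, each of demand $1$. Then this instance has exactly two path-solutions, and both are integral.
   Context: A path-solution is a (possibly fractional) multiflow $f\ge0$ on simple paths of $G$ routing at least one unit between $s_1,t_1$ and at least one unit between $s_2,t_2$, with total flow at most $1$ on every edge, whose support paths ($f(P)>0$) are pairwise uncrossed. Two paths $P,Q$ of the embedded graph cross if there is a maximal common subpath $Z$ (possibly a single node) containing no endpoint of $P$ or $Q$ such that, writing $P=P_1,e,Z,e',P_2$ and $Q=Q_1,g,Z,g',Q_2$, the edges $e,g,e',g'$ alternate between $P$ and $Q$ in the clockwise order around $Z$. *)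

theory Defs
  imports "HOL-Analysis.Analysis" "HOL-Library.Sublist"
begin

datatype node = U1 | S1 | L1 | H1 | S2 | U2 | V1 | T1 | L2 | H2 | T2 | V2

fun coord :: "node \<Rightarrow> complex" where
  "coord U1 = Complex 0 2"
| "coord S1 = Complex 1 2"
| "coord L1 = Complex 2 0"
| "coord H1 = Complex 2 4"
| "coord S2 = Complex 3 2"
| "coord U2 = Complex 4 2"
| "coord V1 = Complex 6 2"
| "coord T1 = Complex 7 2"
| "coord L2 = Complex 8 0"
| "coord H2 = Complex 8 4"
| "coord T2 = Complex 9 2"
| "coord V2 = Complex 10 2"

text \<open>Edges (undirected, straight-line, all of capacity 1).\<close>
definition E :: "node set set" where
  "E = {{L1,L2},{H1,H2},{L1,U1},{L1,U2},{H1,U1},{H1,U2},{L2,V1},{L2,V2},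
        {H2,V1},{H2,V2},{S1,U1},{S2,U2},{T1,V1},{T2,V2}}"

definition path_edges :: "node list \<Rightarrow> node set set" where
  "path_edges P = {{P ! i, P ! Suc i} | i. Suc i < length P}"

definition simple_path :: "node list \<Rightarrow> bool" where
  "simple_path P \<longleftrightarrow> P \<noteq> [] \<and> distinct P \<and> path_edges P \<subseteq> E"

text \<open>H-paths: simple paths routing demand s1t1 or s2t2 (each path is written
  starting at its source s_i, so a path and its reversal are not counted twice).\<close>
definition H_path :: "node list \<Rightarrow> bool" where
  "H_path P \<longleftrightarrow> simple_path P \<and>
     ((hd P = S1 \<and> last P = T1) \<or> (hd P = S2 \<and> last P = T2))"

text \<open>Clockwise angle, at node z, by which the direction towards a must be
  rotated clockwise to reach the direction towards w (value in [0, 2 pi)).\<close>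
definition cw_angle :: "node \<Rightarrow> node \<Rightarrow> node \<Rightarrow> real" where
  "cw_angle z a w =
     (let d = Arg (coord a - coord z) - Arg (coord w - coord z)
      in if d < 0 then d + 2 * pi else d)"

text \<open>Position of a dart (z, w) (an edge zw leaving the common subpath Z at its end
  node z) in the clockwise boundary walk around Z.  For a single node Z this is the
  clockwise angular order at z; for a longer path Z = z_1 ... z_k the boundary walk
  first sweeps clockwise around z_1 starting after the edge z_1 z_2, then (after the
  darts at interior nodes on one side) sweeps clockwise around z_k starting after the
  edge z_k z_(k-1).  Only darts at the end nodes of Z are needed.  Any cut of the
  cyclic order gives the same notion of alternation.\<close>
definition dart_pos :: "node list \<Rightarrow> node \<times> node \<Rightarrow> real" where
  "dart_pos Z d =
     (let z = fst d; w = snd d in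
      if length Z = 1 then - Arg (coord w - coord z)
      else if z = hd Z then cw_angle z (Z ! 1) w
      else 2 * pi + cw_angle z (Z ! (length Z - 2)) w)"

definition alternate :: "node list \<Rightarrow> node \<times> node \<Rightarrow> node \<times> node \<Rightarrow> node \<times> node \<Rightarrow> node \<times> node \<Rightarrow> bool" where
  "alternate Z e g e' g' =
     (let x = dart_pos Z e; y = dart_pos Z e';
          betw = (\<lambda>p. min x y < p \<and> p < max x y)
      in betw (dart_pos Z g) \<noteq> betw (dart_pos Z g'))"

definition common_subpath :: "node list \<Rightarrow> node list \<Rightarrow> node list \<Rightarrow> bool" where
  "common_subpath P Q Z \<longleftrightarrow> Z \<noteq> [] \<and> sublist Z P \<and> (sublist Z Q \<or> sublist (rev Z) Q)"

definition maximal_common_subpath :: "node list \<Rightarrow> node list \<Rightarrow> node list \<Rightarrow> bool" where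
  "maximal_common_subpath P Q Z \<longleftrightarrow> common_subpath P Q Z \<and>
     (\<forall>Z'. common_subpath P Q Z' \<and> (sublist Z Z' \<or> sublist (rev Z) Z') \<longrightarrow> length Z' \<le> length Z)"

definition crosses :: "node list \<Rightarrow> node list \<Rightarrow> bool" where
  "crosses P Q \<longleftrightarrow> (\<exists>Z P1 P2 Q1 Q2.
     maximal_common_subpath P Q Z \<and>
     (\<forall>z\<in>set Z. z \<notin> {hd P, last P, hd Q, last Q}) \<and>
     P1 \<noteq> [] \<and> P2 \<noteq> [] \<and> Q1 \<noteq> [] \<and> Q2 \<noteq> [] \<and>
     P = P1 @ Z @ P2 \<and>
     ((Q = Q1 @ Z @ Q2 \<and>
        alternate Z (hd Z, last P1) (hd Z, last Q1) (last Z, hd P2) (last Z, hd Q2)) \<or>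
      (Q = Q1 @ rev Z @ Q2 \<and>
        alternate Z (hd Z, last P1) (last Z, last Q1) (last Z, hd P2) (hd Z, hd Q2))))"

definition path_solution :: "(node list \<Rightarrow> real) \<Rightarrow> bool" where
  "path_solution f \<longleftrightarrow>
     (\<forall>P. f P \<ge> 0) \<and> (\<forall>P. f P > 0 \<longrightarrow> H_path P) \<and>
     (\<Sum>P\<in>{P. H_path P \<and> hd P = S1 \<and> last P = T1}. f P) \<ge> 1 \<and>
     (\<Sum>P\<in>{P. H_path P \<and> hd P = S2 \<and> last P = T2}. f P) \<ge> 1 \<and>
     (\<forall>e\<in>E. (\<Sum>P\<in>{P. H_path P \<and> e \<in> path_edges P}. f P) \<le> 1) \<and>
     (\<forall>P Q. f P > 0 \<and> f Q > 0 \<and> P \<noteq> Q \<longrightarrow> \<not> crosses P Q)"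

end

theory Submission
  imports Defs
begin


lemma path_edges_Nil[simp]: "path_edges [] = {}"
  by (simp add: path_edges_def)
lemma path_edges_single[simp]: "path_edges [a] = {}"
  by (simp add: path_edges_def)
lemma path_edges_Cons2[simp]: "path_edges (a # b # rest) = insert {a,b} (path_edges (b # rest))"
proof (rule set_eqI, rule iffI)
  fix x assume "x \<in> path_edges (a # b # rest)"
  then obtain i where i: "x = {(a#b#rest) ! i, (a#b#rest) ! Suc i}" "Suc i < length (a#b#rest)"
    unfolding path_edges_def by blast
  show "x \<in> insert {a,b} (path_edges (b # rest))"
  proof (cases i)
    case 0 then show ?thesis using i by simp
  next
    case (Suc j) then show ?thesis using i unfolding path_edges_def by auto
  qed
next
  fix x assume x: "x \<in> insert {a,b} (path_edges (b # rest))"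
  show "x \<in> path_edges (a # b # rest)"
  proof (cases "x = {a,b}")
    case True
    then show ?thesis unfolding path_edges_def by (rule_tac CollectI, rule_tac x=0 in exI) simp
  next
    case False
    then obtain j where j: "x = {(b#rest) ! j, (b#rest) ! Suc j}" "Suc j < length (b#rest)"
      using x unfolding path_edges_def by blast
    then show ?thesis unfolding path_edges_def by (rule_tac CollectI, rule_tac x="Suc j" in exI) simp
  qed
qed

fun adj :: "node \<Rightarrow> node list" where
  "adj U1 = [L1, H1, S1]"
| "adj S1 = [U1]"
| "adj L1 = [L2, U1, U2]"
| "adj H1 = [H2, U1, U2]"
| "adj S2 = [U2]"
| "adj U2 = [L1, H1, S2]"
| "adj V1 = [L2, H2, T1]"
| "adj T1 = [V1]"
| "adj L2 = [L1, V1, V2]"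
| "adj H2 = [H1, V1, V2]"
| "adj T2 = [V2]"
| "adj V2 = [L2, H2, T2]"

lemma adj_E: "{a,b} \<in> E \<Longrightarrow> b \<in> set (adj a)"
  by (cases a; cases b) (auto simp: E_def doubleton_eq_iff)

fun gen :: "nat \<Rightarrow> node list \<Rightarrow> node \<Rightarrow> node \<Rightarrow> node list list" where
  "gen 0 V a t = (if a = t then [[a]] else [])"
| "gen (Suc n) V a t = (if a = t then [[a]] else
     concat (map (\<lambda>b. if b \<in> set (a#V) then [] else map ((#) a) (gen n (a#V) b t)) (adj a)))"

lemma gen_complete:
  "distinct (a#rest) \<Longrightarrow> path_edges (a#rest) \<subseteq> E \<Longrightarrow> last (a#rest) = t \<Longrightarrow>
   set (a#rest) \<inter> set V = {} \<Longrightarrow> length rest \<le> n \<Longrightarrow> a#rest \<in> set (gen n V a t)"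
proof (induction n arbitrary: V a rest)
  case 0
  then show ?case by simp
next
  case (Suc n)
  show ?case
  proof (cases "a = t")
    case True
    have "rest = []"
    proof (rule ccontr)
      assume "rest \<noteq> []"
      then have "last rest = t" "last rest \<in> set rest" using Suc.prems(3) by auto
      then show False using Suc.prems(1) True by auto
    qed
    then show ?thesis using True by simp
  next
    case False
    then obtain b rest' where r: "rest = b # rest'" using Suc.prems(3) by (cases rest) auto
    have bE: "b \<in> set (adj a)" using Suc.prems(2) r adj_E by auto
    have bV: "b \<notin> set (a#V)" using Suc.prems(1,4) r by auto
    have "b#rest' \<in> set (gen n (a#V) b t)"
      apply (rule Suc.IH) using Suc.prems r by auto
    then show ?thesis using False r bE bV by force
  qed
qed

lemma UNIV_node: "(UNIV :: node set) = {U1, S1, L1, H1, S2, U2, V1, T1, L2, H2, T2, V2}"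
  by (auto intro: node.exhaust)

lemma distinct_len: "distinct (P :: node list) \<Longrightarrow> length P \<le> 12"
proof -
  assume d: "distinct P"
  have "length P = card (set P)" using distinct_card[OF d] by simp
  also have "\<dots> \<le> card {U1, S1, L1, H1, S2, U2, V1, T1, L2, H2, T2, V2}"
    by (rule card_mono, simp, subst UNIV_node[symmetric], simp)
  also have "\<dots> = 12" by simp
  finally show ?thesis .
qed

definition "pa0 = [S1, U1, L1, L2, V1, T1]"
definition "pa1 = [S1, U1, L1, L2, V2, H2, V1, T1]"
definition "pa2 = [S1, U1, L1, U2, H1, H2, V1, T1]"
definition "pa3 = [S1, U1, L1, U2, H1, H2, V2, L2, V1, T1]"
definition "pa4 = [S1, U1, H1, H2, V1, T1]"
definition "pa5 = [S1, U1, H1, H2, V2, L2, V1, T1]"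
definition "pa6 = [S1, U1, H1, U2, L1, L2, V1, T1]"
definition "pa7 = [S1, U1, H1, U2, L1, L2, V2, H2, V1, T1]"
definition "pb0 = [S2, U2, L1, L2, V1, H2, V2, T2]"
definition "pb1 = [S2, U2, L1, L2, V2, T2]"
definition "pb2 = [S2, U2, L1, U1, H1, H2, V1, L2, V2, T2]"
definition "pb3 = [S2, U2, L1, U1, H1, H2, V2, T2]"
definition "pb4 = [S2, U2, H1, H2, V1, L2, V2, T2]"
definition "pb5 = [S2, U2, H1, H2, V2, T2]"
definition "pb6 = [S2, U2, H1, U1, L1, L2, V1, H2, V2, T2]"
definition "pb7 = [S2, U2, H1, U1, L1, L2, V2, T2]"
lemmas pdefs = pa0_def pa1_def pa2_def pa3_def pa4_def pa5_def pa6_def pa7_def pb0_def pb1_def pb2_def pb3_def pb4_def pb5_def pb6_def pb7_def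
definition "pathsA = [pa0, pa1, pa2, pa3, pa4, pa5, pa6, pa7]"
definition "pathsB = [pb0, pb1, pb2, pb3, pb4, pb5, pb6, pb7]"

lemma genA: "gen 11 [] S1 T1 = pathsA"
  unfolding pathsA_def pdefs by (simp add: eval_nat_numeral)
lemma genB: "gen 11 [] S2 T2 = pathsB"
  unfolding pathsB_def pdefs by (simp add: eval_nat_numeral)

lemma H_path_A: "H_path P \<Longrightarrow> hd P = S1 \<Longrightarrow> P \<in> set pathsA"
proof -
  assume h: "H_path P" "hd P = S1"
  then have sp: "P \<noteq> []" "distinct P" "path_edges P \<subseteq> E" "last P = T1"
    by (auto simp: H_path_def simple_path_def)
  then obtain rest where P: "P = S1 # rest" using h(2) by (cases P) auto
  have "length rest \<le> 11" using distinct_len[OF sp(2)] P by simp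
  then have "P \<in> set (gen 11 [] S1 T1)" using sp P by (intro gen_complete[of S1 rest, simplified P[symmetric]]) auto
  then show ?thesis by (simp add: genA)
qed

lemma H_path_B: "H_path P \<Longrightarrow> hd P = S2 \<Longrightarrow> P \<in> set pathsB"
proof -
  assume h: "H_path P" "hd P = S2"
  then have sp: "P \<noteq> []" "distinct P" "path_edges P \<subseteq> E" "last P = T2"
    by (auto simp: H_path_def simple_path_def)
  then obtain rest where P: "P = S2 # rest" using h(2) by (cases P) auto
  have "length rest \<le> 11" using distinct_len[OF sp(2)] P by simp
  then have "P \<in> set (gen 11 [] S2 T2)" using sp P by (intro gen_complete[of S2 rest, simplified P[symmetric]]) auto
  then show ?thesis by (simp add: genB)
qed

lemma inE: "{a,b} \<in> E \<longleftrightarrow> b \<in> set (adj a)"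
  by (cases a; cases b) (simp_all add: E_def doubleton_eq_iff)

lemma Hpaths_all: "list_all H_path (pathsA @ pathsB)"
  unfolding pathsA_def pathsB_def pdefs
  by (simp add: H_path_def simple_path_def inE)

lemma H_path_paths: "P \<in> set (pathsA @ pathsB) \<Longrightarrow> H_path P"
  using Hpaths_all by (simp add: list_all_iff)

lemma H_path_hd: "H_path P \<Longrightarrow> hd P = S1 \<or> hd P = S2"
  unfolding H_path_def by blast

lemma H_path_iff: "H_path P \<longleftrightarrow> P \<in> set (pathsA @ pathsB)"
proof
  assume H: "H_path P"
  then have "P \<in> set pathsA \<or> P \<in> set pathsB" using H_path_hd[OF H] H_path_A H_path_B by blast
  then show "P \<in> set (pathsA @ pathsB)" by simp
qed (rule H_path_paths)

lemma endsA: "list_all (\<lambda>P. hd P = S1 \<and> last P = T1) pathsA"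
  by (simp add: pathsA_def pdefs)
lemma endsB: "list_all (\<lambda>P. hd P = S2 \<and> last P = T2) pathsB"
  by (simp add: pathsB_def pdefs)

lemma setA: "{P. H_path P \<and> hd P = S1 \<and> last P = T1} = set pathsA"
  using H_path_paths H_path_A endsA by (auto simp: list_all_iff)
lemma setB: "{P. H_path P \<and> hd P = S2 \<and> last P = T2} = set pathsB"
  using H_path_paths H_path_B endsB by (auto simp: list_all_iff)

lemma edge_set: "{P. H_path P \<and> e \<in> path_edges P} = set (filter (\<lambda>P. e \<in> path_edges P) (pathsA @ pathsB))"
  by (auto simp: H_path_iff)


lemma Arg_polar: "0 < r \<Longrightarrow> -pi < t \<Longrightarrow> t \<le> pi \<Longrightarrow> Arg (Complex (r * cos t) (r * sin t)) = t"
  by (rule Arg_unique[of r]) (simp_all add: cis_conv_exp[symmetric] complex_eq_iff)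

lemma sq2: "a * sqrt 2 * sqrt 2 / 2 = (a::real)"
  by (simp add: mult.assoc)

lemma Arg_E: "0 < a \<Longrightarrow> Arg (Complex a 0) = 0"
  by (simp add: Arg_eq_0 complex_is_Real_iff)
lemma Arg_W: "a < 0 \<Longrightarrow> Arg (Complex a 0) = pi"
  by (simp add: Arg_eq_pi)
lemma Arg_NE: "0 < a \<Longrightarrow> Arg (Complex a a) = pi/4"
  using Arg_polar[of "a * sqrt 2" "pi/4"] by (simp add: cos_45 sin_45 sq2)
lemma Arg_NW: "0 < a \<Longrightarrow> Arg (Complex (-a) a) = 3*pi/4"
proof -
  assume a: "0 < a"
  have c: "cos (3*pi/4) = - (sqrt 2 / 2)" "sin (3*pi/4) = sqrt 2 / 2"
    using cos_pi_minus[of "pi/4"] sin_pi_minus[of "pi/4"] by (simp_all add: cos_45 sin_45 field_simps)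
  show ?thesis using Arg_polar[of "a * sqrt 2" "3*pi/4"] a by (simp add: c sq2)
qed
lemma Arg_SE: "0 < a \<Longrightarrow> Arg (Complex a (-a)) = -(pi/4)"
  using Arg_polar[of "a * sqrt 2" "-(pi/4)"] pi_gt_zero by (simp add: cos_45 sin_45 sq2)
lemma Arg_SW: "0 < a \<Longrightarrow> Arg (Complex (-a) (-a)) = -(3*pi/4)"
proof -
  assume a: "0 < a"
  have c: "cos (3*pi/4) = - (sqrt 2 / 2)" "sin (3*pi/4) = sqrt 2 / 2"
    using cos_pi_minus[of "pi/4"] sin_pi_minus[of "pi/4"] by (simp_all add: cos_45 sin_45 field_simps)
  show ?thesis using Arg_polar[of "a * sqrt 2" "-(3*pi/4)"] a pi_gt_zero by (simp add: c sq2)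
qed

lemmas Arg_dirs = Arg_E Arg_W Arg_NE Arg_NW Arg_SE Arg_SW

lemma window:
  assumes "sublist [x,y] Z'" "length Z' > 2"
  shows "\<exists>w. sublist [w,x,y] Z' \<or> sublist [x,y,w] Z'"
proof -
  obtain ps ss where Z: "Z' = ps @ [x,y] @ ss" using assms(1) by (auto simp: sublist_def)
  show ?thesis
  proof (cases "ps = []")
    case False
    then have "Z' = butlast ps @ [last ps, x, y] @ ss" using Z by simp
    then have "sublist [last ps, x, y] Z'" by (metis sublist_appendI)
    then show ?thesis by blast
  next
    case True
    then have "ss \<noteq> []" using Z assms(2) by auto
    then have "Z' = [] @ [x, y, hd ss] @ tl ss" using Z True by simp
    then have "sublist [x, y, hd ss] Z'" by (metis sublist_appendI)
    then show ?thesis by blast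
  qed
qed

lemma max2I:
  assumes "common_subpath P Q [x,y]"
    and "\<And>w W. W \<in> {[w,x,y],[x,y,w],[w,y,x],[y,x,w]} \<Longrightarrow> sublist W P \<Longrightarrow> sublist W Q \<or> sublist (rev W) Q \<Longrightarrow> False"
  shows "maximal_common_subpath P Q [x,y]"
  unfolding maximal_common_subpath_def
proof (intro conjI allI impI)
  show "common_subpath P Q [x,y]" by fact
  fix Z' assume h: "common_subpath P Q Z' \<and> (sublist [x,y] Z' \<or> sublist (rev [x,y]) Z')"
  show "length Z' \<le> length [x,y]"
  proof (rule ccontr)
    assume "\<not> ?thesis"
    then have l: "length Z' > 2" by simp
    from h have PZ: "sublist Z' P" and QZ: "sublist Z' Q \<or> sublist (rev Z') Q"
      by (auto simp: common_subpath_def)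
    from h have "sublist [x,y] Z' \<or> sublist [y,x] Z'" by simp
    then obtain w W where W: "W \<in> {[w,x,y],[x,y,w],[w,y,x],[y,x,w]}" "sublist W Z'"
      using window[OF _ l, of x y] window[OF _ l, of y x] by blast
    have "sublist W P" using W(2) PZ sublist_order.order.trans by blast
    moreover have "sublist W Q \<or> sublist (rev W) Q"
      using QZ W(2) sublist_order.order.trans sublist_rev by metis
    ultimately show False using assms(2)[OF W(1)] by blast
  qed
qed

lemma crossI_same:
  "maximal_common_subpath P Q Z \<Longrightarrow> (\<forall>z\<in>set Z. z \<notin> {hd P, last P, hd Q, last Q}) \<Longrightarrow>
   Pa \<noteq> [] \<Longrightarrow> Pb \<noteq> [] \<Longrightarrow> Qa \<noteq> [] \<Longrightarrow> Qb \<noteq> [] \<Longrightarrow>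
   P = Pa @ Z @ Pb \<Longrightarrow> Q = Qa @ Z @ Qb \<Longrightarrow>
   alternate Z (hd Z, last Pa) (hd Z, last Qa) (last Z, hd Pb) (last Z, hd Qb) \<Longrightarrow> crosses P Q"
  unfolding crosses_def by blast

lemma crossI_rev:
  "maximal_common_subpath P Q Z \<Longrightarrow> (\<forall>z\<in>set Z. z \<notin> {hd P, last P, hd Q, last Q}) \<Longrightarrow>
   Pa \<noteq> [] \<Longrightarrow> Pb \<noteq> [] \<Longrightarrow> Qa \<noteq> [] \<Longrightarrow> Qb \<noteq> [] \<Longrightarrow>
   P = Pa @ Z @ Pb \<Longrightarrow> Q = Qa @ rev Z @ Qb \<Longrightarrow>
   alternate Z (hd Z, last Pa) (last Z, last Qa) (last Z, hd Pb) (hd Z, hd Qb) \<Longrightarrow> crosses P Q"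
  unfolding crosses_def by blast

lemma cross_X1_11: "crosses pa1 pb3"
  apply (rule crossI_rev[where Z="[U1, L1]" and Pa="[S1]" and Pb="[L2, V2, H2, V1, T1]" and Qa="[S2, U2]" and Qb="[H1, H2, V2, T2]"])
  apply (rule max2I)
  apply (simp add: common_subpath_def sublist_code prefix_code pdefs)
  apply (auto simp: sublist_code prefix_code pdefs)[1]
  apply (simp_all add: pdefs)
  using pi_gt_zero by (simp add: alternate_def dart_pos_def cw_angle_def Let_def complex_diff Arg_dirs)

lemma cross_X2_8: "crosses pa2 pb0"
  apply (rule crossI_rev[where Z="[L1, U2]" and Pa="[S1, U1]" and Pb="[H1, H2, V1, T1]" and Qa="[S2]" and Qb="[L2, V1, H2, V2, T2]"])
  apply (rule max2I)
  apply (simp add: common_subpath_def sublist_code prefix_code pdefs)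
  apply (auto simp: sublist_code prefix_code pdefs)[1]
  apply (simp_all add: pdefs)
  using pi_gt_zero by (simp add: alternate_def dart_pos_def cw_angle_def Let_def complex_diff Arg_dirs)

lemma cross_X5_15: "crosses pa5 pb7"
  apply (rule crossI_rev[where Z="[U1, H1]" and Pa="[S1]" and Pb="[H2, V2, L2, V1, T1]" and Qa="[S2, U2]" and Qb="[L1, L2, V2, T2]"])
  apply (rule max2I)
  apply (simp add: common_subpath_def sublist_code prefix_code pdefs)
  apply (auto simp: sublist_code prefix_code pdefs)[1]
  apply (simp_all add: pdefs)
  using pi_gt_zero by (simp add: alternate_def dart_pos_def cw_angle_def Let_def complex_diff Arg_dirs)

lemma cross_X6_12: "crosses pa6 pb4"
  apply (rule crossI_rev[where Z="[H1, U2]" and Pa="[S1, U1]" and Pb="[L1, L2, V1, T1]" and Qa="[S2]" and Qb="[H2, V1, L2, V2, T2]"])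
  apply (rule max2I)
  apply (simp add: common_subpath_def sublist_code prefix_code pdefs)
  apply (auto simp: sublist_code prefix_code pdefs)[1]
  apply (simp_all add: pdefs)
  using pi_gt_zero by (simp add: alternate_def dart_pos_def cw_angle_def Let_def complex_diff Arg_dirs)

lemma cross_X9_14: "crosses pb1 pb6"
  apply (rule crossI_same[where Z="[L1, L2]" and Pa="[S2, U2]" and Pb="[V2, T2]" and Qa="[S2, U2, H1, U1]" and Qb="[V1, H2, V2, T2]"])
  apply (rule max2I)
  apply (simp add: common_subpath_def sublist_code prefix_code pdefs)
  apply (auto simp: sublist_code prefix_code pdefs)[1]
  apply (simp_all add: pdefs)
  using pi_gt_zero by (simp add: alternate_def dart_pos_def cw_angle_def Let_def complex_diff Arg_dirs)

lemma cross_X10_13: "crosses pb2 pb5"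
  apply (rule crossI_same[where Z="[H1, H2]" and Pa="[S2, U2, L1, U1]" and Pb="[V1, L2, V2, T2]" and Qa="[S2, U2]" and Qb="[V2, T2]"])
  apply (rule max2I)
  apply (simp add: common_subpath_def sublist_code prefix_code pdefs)
  apply (auto simp: sublist_code prefix_code pdefs)[1]
  apply (simp_all add: pdefs)
  using pi_gt_zero by (simp add: alternate_def dart_pos_def cw_angle_def Let_def complex_diff Arg_dirs)

lemma cross_X0_12: "crosses pa0 pb4"
  apply (rule crossI_rev[where Z="[L2, V1]" and Pa="[S1, U1, L1]" and Pb="[T1]" and Qa="[S2, U2, H1, H2]" and Qb="[V2, T2]"])
  apply (rule max2I)
  apply (simp add: common_subpath_def sublist_code prefix_code pdefs)
  apply (auto simp: sublist_code prefix_code pdefs)[1]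
  apply (simp_all add: pdefs)
  using pi_gt_zero by (simp add: alternate_def dart_pos_def cw_angle_def Let_def complex_diff Arg_dirs)

lemma cross_X2_9: "crosses pa2 pb1"
  apply (rule crossI_rev[where Z="[L1, U2]" and Pa="[S1, U1]" and Pb="[H1, H2, V1, T1]" and Qa="[S2]" and Qb="[L2, V2, T2]"])
  apply (rule max2I)
  apply (simp add: common_subpath_def sublist_code prefix_code pdefs)
  apply (auto simp: sublist_code prefix_code pdefs)[1]
  apply (simp_all add: pdefs)
  using pi_gt_zero by (simp add: alternate_def dart_pos_def cw_angle_def Let_def complex_diff Arg_dirs)

lemma cross_X4_8: "crosses pa4 pb0"
  apply (rule crossI_rev[where Z="[H2, V1]" and Pa="[S1, U1, H1]" and Pb="[T1]" and Qa="[S2, U2, L1, L2]" and Qb="[V2, T2]"])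
  apply (rule max2I)
  apply (simp add: common_subpath_def sublist_code prefix_code pdefs)
  apply (auto simp: sublist_code prefix_code pdefs)[1]
  apply (simp_all add: pdefs)
  using pi_gt_zero by (simp add: alternate_def dart_pos_def cw_angle_def Let_def complex_diff Arg_dirs)

lemma cross_X6_13: "crosses pa6 pb5"
  apply (rule crossI_rev[where Z="[H1, U2]" and Pa="[S1, U1]" and Pb="[L1, L2, V1, T1]" and Qa="[S2]" and Qb="[H2, V2, T2]"])
  apply (rule max2I)
  apply (simp add: common_subpath_def sublist_code prefix_code pdefs)
  apply (auto simp: sublist_code prefix_code pdefs)[1]
  apply (simp_all add: pdefs)
  using pi_gt_zero by (simp add: alternate_def dart_pos_def cw_angle_def Let_def complex_diff Arg_dirs)

lemma cross_X0_9: "crosses pa0 pb1"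
  apply (rule crossI_same[where Z="[L1, L2]" and Pa="[S1, U1]" and Pb="[V1, T1]" and Qa="[S2, U2]" and Qb="[V2, T2]"])
  apply (rule max2I)
  apply (simp add: common_subpath_def sublist_code prefix_code pdefs)
  apply (auto simp: sublist_code prefix_code pdefs)[1]
  apply (simp_all add: pdefs)
  using pi_gt_zero by (simp add: alternate_def dart_pos_def cw_angle_def Let_def complex_diff Arg_dirs)

lemma cross_X4_13: "crosses pa4 pb5"
  apply (rule crossI_same[where Z="[H1, H2]" and Pa="[S1, U1]" and Pb="[V1, T1]" and Qa="[S2, U2]" and Qb="[V2, T2]"])
  apply (rule max2I)
  apply (simp add: common_subpath_def sublist_code prefix_code pdefs)
  apply (auto simp: sublist_code prefix_code pdefs)[1]
  apply (simp_all add: pdefs)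
  using pi_gt_zero by (simp add: alternate_def dart_pos_def cw_angle_def Let_def complex_diff Arg_dirs)


lemma disj_not_cross: "set P \<inter> set Q = {} \<Longrightarrow> \<not> crosses P Q"
proof
  assume d: "set P \<inter> set Q = {}" and c: "crosses P Q"
  then obtain Z where m: "maximal_common_subpath P Q Z" unfolding crosses_def by blast
  then have "Z \<noteq> []" "sublist Z P" "sublist Z Q \<or> sublist (rev Z) Q"
    by (auto simp: maximal_common_subpath_def common_subpath_def)
  then obtain z where "z \<in> set Z" "set Z \<subseteq> set P" "set Z \<subseteq> set Q"
    by (metis last_in_set set_mono_sublist set_rev)
  then show False using d by blast
qed



lemma LP:
  fixes a0 a1 a2 a3 a4 a5 a6 a7 b0 b1 b2 b3 b4 b5 b6 b7 :: real
  assumes "a0 \<ge> 0" "a1 \<ge> 0" "a2 \<ge> 0" "a3 \<ge> 0" "a4 \<ge> 0" "a5 \<ge> 0" "a6 \<ge> 0" "a7 \<ge> 0" "b0 \<ge> 0" "b1 \<ge> 0" "b2 \<ge> 0" "b3 \<ge> 0" "b4 \<ge> 0" "b5 \<ge> 0" "b6 \<ge> 0" "b7 \<ge> 0"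
    and "a0 + a1 + a2 + a3 + a4 + a5 + a6 + a7 \<ge> 1"
    and "b0 + b1 + b2 + b3 + b4 + b5 + b6 + b7 \<ge> 1"
    and "a0 + a1 + a6 + a7 + b0 + b1 + b6 + b7 \<le> 1"
    and "a2 + a3 + a4 + a5 + b2 + b3 + b4 + b5 \<le> 1"
    and "a0 + a1 + a2 + a3 + b2 + b3 + b6 + b7 \<le> 1"
    and "a2 + a3 + a6 + a7 + b0 + b1 + b2 + b3 \<le> 1"
    and "a4 + a5 + a6 + a7 + b2 + b3 + b6 + b7 \<le> 1"
    and "a2 + a3 + a6 + a7 + b4 + b5 + b6 + b7 \<le> 1"
    and "a0 + a3 + a5 + a6 + b0 + b2 + b4 + b6 \<le> 1"
    and "a1 + a3 + a5 + a7 + b1 + b2 + b4 + b7 \<le> 1"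
    and "a1 + a2 + a4 + a7 + b0 + b2 + b4 + b6 \<le> 1"
    and "a1 + a3 + a5 + a7 + b0 + b3 + b5 + b6 \<le> 1"
    and "a1 = 0 \<or> b3 = 0"
    and "a2 = 0 \<or> b0 = 0"
    and "a5 = 0 \<or> b7 = 0"
    and "a6 = 0 \<or> b4 = 0"
    and "b1 = 0 \<or> b6 = 0"
    and "b2 = 0 \<or> b5 = 0"
    and "a0 = 0 \<or> b4 = 0"
    and "a2 = 0 \<or> b1 = 0"
    and "a4 = 0 \<or> b0 = 0"
    and "a6 = 0 \<or> b5 = 0"
    and "a0 = 0 \<or> b1 = 0"
    and "a4 = 0 \<or> b5 = 0"
  shows "(a0 = 1 \<and> a1 = 0 \<and> a2 = 0 \<and> a3 = 0 \<and> a4 = 0 \<and> a5 = 0 \<and> a6 = 0 \<and> a7 = 0 \<and> b0 = 0 \<and> b1 = 0 \<and> b2 = 0 \<and> b3 = 0 \<and> b4 = 0 \<and> b5 = 1 \<and> b6 = 0 \<and> b7 = 0) \<or> (a0 = 0 \<and> a1 = 0 \<and> a2 = 0 \<and> a3 = 0 \<and> a4 = 1 \<and> a5 = 0 \<and> a6 = 0 \<and> a7 = 0 \<and> b0 = 0 \<and> b1 = 1 \<and> b2 = 0 \<and> b3 = 0 \<and> b4 = 0 \<and> b5 = 0 \<and> b6 = 0 \<and> b7 = 0)"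
  using assms by smt

lemma asum: "sum g {P. H_path P \<and> hd P = S1 \<and> last P = T1} = g pa0 + g pa1 + g pa2 + g pa3 + g pa4 + g pa5 + g pa6 + g pa7"
proof -
  have "distinct pathsA" by (simp add: pathsA_def pdefs)
  then show ?thesis using setA sum_list_distinct_conv_sum_set[of pathsA g] by (simp add: pathsA_def add.assoc)
qed

lemma bsum: "sum g {P. H_path P \<and> hd P = S2 \<and> last P = T2} = g pb0 + g pb1 + g pb2 + g pb3 + g pb4 + g pb5 + g pb6 + g pb7"
proof -
  have "distinct pathsB" by (simp add: pathsB_def pdefs)
  then show ?thesis using setB sum_list_distinct_conv_sum_set[of pathsB g] by (simp add: pathsB_def add.assoc)
qed

lemma esum_L1_L2: "sum g {P. H_path P \<and> {L1,L2} \<in> path_edges P} = g pa0 + g pa1 + g pa6 + g pa7 + g pb0 + g pb1 + g pb6 + g pb7"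
proof -
  have "filter (\<lambda>P. {L1,L2} \<in> path_edges P) (pathsA @ pathsB) = [pa0, pa1, pa6, pa7, pb0, pb1, pb6, pb7]"
    by (simp add: pathsA_def pathsB_def pdefs doubleton_eq_iff)
  moreover have "distinct [pa0, pa1, pa6, pa7, pb0, pb1, pb6, pb7]" by (simp add: pdefs)
  ultimately show ?thesis using edge_set[of "{L1,L2}"] sum_list_distinct_conv_sum_set[of "[pa0, pa1, pa6, pa7, pb0, pb1, pb6, pb7]" g] by (simp add: add.assoc)
qed

lemma esum_H1_H2: "sum g {P. H_path P \<and> {H1,H2} \<in> path_edges P} = g pa2 + g pa3 + g pa4 + g pa5 + g pb2 + g pb3 + g pb4 + g pb5"
proof -
  have "filter (\<lambda>P. {H1,H2} \<in> path_edges P) (pathsA @ pathsB) = [pa2, pa3, pa4, pa5, pb2, pb3, pb4, pb5]"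
    by (simp add: pathsA_def pathsB_def pdefs doubleton_eq_iff)
  moreover have "distinct [pa2, pa3, pa4, pa5, pb2, pb3, pb4, pb5]" by (simp add: pdefs)
  ultimately show ?thesis using edge_set[of "{H1,H2}"] sum_list_distinct_conv_sum_set[of "[pa2, pa3, pa4, pa5, pb2, pb3, pb4, pb5]" g] by (simp add: add.assoc)
qed

lemma esum_L1_U1: "sum g {P. H_path P \<and> {L1,U1} \<in> path_edges P} = g pa0 + g pa1 + g pa2 + g pa3 + g pb2 + g pb3 + g pb6 + g pb7"
proof -
  have "filter (\<lambda>P. {L1,U1} \<in> path_edges P) (pathsA @ pathsB) = [pa0, pa1, pa2, pa3, pb2, pb3, pb6, pb7]"
    by (simp add: pathsA_def pathsB_def pdefs doubleton_eq_iff)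
  moreover have "distinct [pa0, pa1, pa2, pa3, pb2, pb3, pb6, pb7]" by (simp add: pdefs)
  ultimately show ?thesis using edge_set[of "{L1,U1}"] sum_list_distinct_conv_sum_set[of "[pa0, pa1, pa2, pa3, pb2, pb3, pb6, pb7]" g] by (simp add: add.assoc)
qed

lemma esum_L1_U2: "sum g {P. H_path P \<and> {L1,U2} \<in> path_edges P} = g pa2 + g pa3 + g pa6 + g pa7 + g pb0 + g pb1 + g pb2 + g pb3"
proof -
  have "filter (\<lambda>P. {L1,U2} \<in> path_edges P) (pathsA @ pathsB) = [pa2, pa3, pa6, pa7, pb0, pb1, pb2, pb3]"
    by (simp add: pathsA_def pathsB_def pdefs doubleton_eq_iff)
  moreover have "distinct [pa2, pa3, pa6, pa7, pb0, pb1, pb2, pb3]" by (simp add: pdefs)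
  ultimately show ?thesis using edge_set[of "{L1,U2}"] sum_list_distinct_conv_sum_set[of "[pa2, pa3, pa6, pa7, pb0, pb1, pb2, pb3]" g] by (simp add: add.assoc)
qed

lemma esum_H1_U1: "sum g {P. H_path P \<and> {H1,U1} \<in> path_edges P} = g pa4 + g pa5 + g pa6 + g pa7 + g pb2 + g pb3 + g pb6 + g pb7"
proof -
  have "filter (\<lambda>P. {H1,U1} \<in> path_edges P) (pathsA @ pathsB) = [pa4, pa5, pa6, pa7, pb2, pb3, pb6, pb7]"
    by (simp add: pathsA_def pathsB_def pdefs doubleton_eq_iff)
  moreover have "distinct [pa4, pa5, pa6, pa7, pb2, pb3, pb6, pb7]" by (simp add: pdefs)
  ultimately show ?thesis using edge_set[of "{H1,U1}"] sum_list_distinct_conv_sum_set[of "[pa4, pa5, pa6, pa7, pb2, pb3, pb6, pb7]" g] by (simp add: add.assoc)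
qed

lemma esum_H1_U2: "sum g {P. H_path P \<and> {H1,U2} \<in> path_edges P} = g pa2 + g pa3 + g pa6 + g pa7 + g pb4 + g pb5 + g pb6 + g pb7"
proof -
  have "filter (\<lambda>P. {H1,U2} \<in> path_edges P) (pathsA @ pathsB) = [pa2, pa3, pa6, pa7, pb4, pb5, pb6, pb7]"
    by (simp add: pathsA_def pathsB_def pdefs doubleton_eq_iff)
  moreover have "distinct [pa2, pa3, pa6, pa7, pb4, pb5, pb6, pb7]" by (simp add: pdefs)
  ultimately show ?thesis using edge_set[of "{H1,U2}"] sum_list_distinct_conv_sum_set[of "[pa2, pa3, pa6, pa7, pb4, pb5, pb6, pb7]" g] by (simp add: add.assoc)
qed

lemma esum_L2_V1: "sum g {P. H_path P \<and> {L2,V1} \<in> path_edges P} = g pa0 + g pa3 + g pa5 + g pa6 + g pb0 + g pb2 + g pb4 + g pb6"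
proof -
  have "filter (\<lambda>P. {L2,V1} \<in> path_edges P) (pathsA @ pathsB) = [pa0, pa3, pa5, pa6, pb0, pb2, pb4, pb6]"
    by (simp add: pathsA_def pathsB_def pdefs doubleton_eq_iff)
  moreover have "distinct [pa0, pa3, pa5, pa6, pb0, pb2, pb4, pb6]" by (simp add: pdefs)
  ultimately show ?thesis using edge_set[of "{L2,V1}"] sum_list_distinct_conv_sum_set[of "[pa0, pa3, pa5, pa6, pb0, pb2, pb4, pb6]" g] by (simp add: add.assoc)
qed

lemma esum_L2_V2: "sum g {P. H_path P \<and> {L2,V2} \<in> path_edges P} = g pa1 + g pa3 + g pa5 + g pa7 + g pb1 + g pb2 + g pb4 + g pb7"
proof -
  have "filter (\<lambda>P. {L2,V2} \<in> path_edges P) (pathsA @ pathsB) = [pa1, pa3, pa5, pa7, pb1, pb2, pb4, pb7]"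
    by (simp add: pathsA_def pathsB_def pdefs doubleton_eq_iff)
  moreover have "distinct [pa1, pa3, pa5, pa7, pb1, pb2, pb4, pb7]" by (simp add: pdefs)
  ultimately show ?thesis using edge_set[of "{L2,V2}"] sum_list_distinct_conv_sum_set[of "[pa1, pa3, pa5, pa7, pb1, pb2, pb4, pb7]" g] by (simp add: add.assoc)
qed

lemma esum_H2_V1: "sum g {P. H_path P \<and> {H2,V1} \<in> path_edges P} = g pa1 + g pa2 + g pa4 + g pa7 + g pb0 + g pb2 + g pb4 + g pb6"
proof -
  have "filter (\<lambda>P. {H2,V1} \<in> path_edges P) (pathsA @ pathsB) = [pa1, pa2, pa4, pa7, pb0, pb2, pb4, pb6]"
    by (simp add: pathsA_def pathsB_def pdefs doubleton_eq_iff)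
  moreover have "distinct [pa1, pa2, pa4, pa7, pb0, pb2, pb4, pb6]" by (simp add: pdefs)
  ultimately show ?thesis using edge_set[of "{H2,V1}"] sum_list_distinct_conv_sum_set[of "[pa1, pa2, pa4, pa7, pb0, pb2, pb4, pb6]" g] by (simp add: add.assoc)
qed

lemma esum_H2_V2: "sum g {P. H_path P \<and> {H2,V2} \<in> path_edges P} = g pa1 + g pa3 + g pa5 + g pa7 + g pb0 + g pb3 + g pb5 + g pb6"
proof -
  have "filter (\<lambda>P. {H2,V2} \<in> path_edges P) (pathsA @ pathsB) = [pa1, pa3, pa5, pa7, pb0, pb3, pb5, pb6]"
    by (simp add: pathsA_def pathsB_def pdefs doubleton_eq_iff)
  moreover have "distinct [pa1, pa3, pa5, pa7, pb0, pb3, pb5, pb6]" by (simp add: pdefs)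
  ultimately show ?thesis using edge_set[of "{H2,V2}"] sum_list_distinct_conv_sum_set[of "[pa1, pa3, pa5, pa7, pb0, pb3, pb5, pb6]" g] by (simp add: add.assoc)
qed

lemma esum_S1_U1: "sum g {P. H_path P \<and> {S1,U1} \<in> path_edges P} = g pa0 + g pa1 + g pa2 + g pa3 + g pa4 + g pa5 + g pa6 + g pa7"
proof -
  have "filter (\<lambda>P. {S1,U1} \<in> path_edges P) (pathsA @ pathsB) = [pa0, pa1, pa2, pa3, pa4, pa5, pa6, pa7]"
    by (simp add: pathsA_def pathsB_def pdefs doubleton_eq_iff)
  moreover have "distinct [pa0, pa1, pa2, pa3, pa4, pa5, pa6, pa7]" by (simp add: pdefs)
  ultimately show ?thesis using edge_set[of "{S1,U1}"] sum_list_distinct_conv_sum_set[of "[pa0, pa1, pa2, pa3, pa4, pa5, pa6, pa7]" g] by (simp add: add.assoc)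
qed

lemma esum_S2_U2: "sum g {P. H_path P \<and> {S2,U2} \<in> path_edges P} = g pb0 + g pb1 + g pb2 + g pb3 + g pb4 + g pb5 + g pb6 + g pb7"
proof -
  have "filter (\<lambda>P. {S2,U2} \<in> path_edges P) (pathsA @ pathsB) = [pb0, pb1, pb2, pb3, pb4, pb5, pb6, pb7]"
    by (simp add: pathsA_def pathsB_def pdefs doubleton_eq_iff)
  moreover have "distinct [pb0, pb1, pb2, pb3, pb4, pb5, pb6, pb7]" by (simp add: pdefs)
  ultimately show ?thesis using edge_set[of "{S2,U2}"] sum_list_distinct_conv_sum_set[of "[pb0, pb1, pb2, pb3, pb4, pb5, pb6, pb7]" g] by (simp add: add.assoc)
qed

lemma esum_T1_V1: "sum g {P. H_path P \<and> {T1,V1} \<in> path_edges P} = g pa0 + g pa1 + g pa2 + g pa3 + g pa4 + g pa5 + g pa6 + g pa7"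
proof -
  have "filter (\<lambda>P. {T1,V1} \<in> path_edges P) (pathsA @ pathsB) = [pa0, pa1, pa2, pa3, pa4, pa5, pa6, pa7]"
    by (simp add: pathsA_def pathsB_def pdefs doubleton_eq_iff)
  moreover have "distinct [pa0, pa1, pa2, pa3, pa4, pa5, pa6, pa7]" by (simp add: pdefs)
  ultimately show ?thesis using edge_set[of "{T1,V1}"] sum_list_distinct_conv_sum_set[of "[pa0, pa1, pa2, pa3, pa4, pa5, pa6, pa7]" g] by (simp add: add.assoc)
qed

lemma esum_T2_V2: "sum g {P. H_path P \<and> {T2,V2} \<in> path_edges P} = g pb0 + g pb1 + g pb2 + g pb3 + g pb4 + g pb5 + g pb6 + g pb7"
proof -
  have "filter (\<lambda>P. {T2,V2} \<in> path_edges P) (pathsA @ pathsB) = [pb0, pb1, pb2, pb3, pb4, pb5, pb6, pb7]"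
    by (simp add: pathsA_def pathsB_def pdefs doubleton_eq_iff)
  moreover have "distinct [pb0, pb1, pb2, pb3, pb4, pb5, pb6, pb7]" by (simp add: pdefs)
  ultimately show ?thesis using edge_set[of "{T2,V2}"] sum_list_distinct_conv_sum_set[of "[pb0, pb1, pb2, pb3, pb4, pb5, pb6, pb7]" g] by (simp add: add.assoc)
qed

lemmas esums = esum_L1_L2 esum_H1_H2 esum_L1_U1 esum_L1_U2 esum_H1_U1 esum_H1_U2 esum_L2_V1 esum_L2_V2 esum_H2_V1 esum_H2_V2 esum_S1_U1 esum_S2_U2 esum_T1_V1 esum_T2_V2

lemma neqs: "pa1 \<noteq> pa0"
  "pa2 \<noteq> pa0"
  "pa3 \<noteq> pa0"
  "pa4 \<noteq> pa0"
  "pa5 \<noteq> pa0"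
  "pa6 \<noteq> pa0"
  "pa7 \<noteq> pa0"
  "pb0 \<noteq> pa0"
  "pb1 \<noteq> pa0"
  "pb2 \<noteq> pa0"
  "pb3 \<noteq> pa0"
  "pb4 \<noteq> pa0"
  "pb5 \<noteq> pa0"
  "pb6 \<noteq> pa0"
  "pb7 \<noteq> pa0"
  "pa0 \<noteq> pb5"
  "pa1 \<noteq> pb5"
  "pa2 \<noteq> pb5"
  "pa3 \<noteq> pb5"
  "pa4 \<noteq> pb5"
  "pa5 \<noteq> pb5"
  "pa6 \<noteq> pb5"
  "pa7 \<noteq> pb5"
  "pb0 \<noteq> pb5"
  "pb1 \<noteq> pb5"
  "pb2 \<noteq> pb5"
  "pb3 \<noteq> pb5"
  "pb4 \<noteq> pb5"
  "pb6 \<noteq> pb5"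
  "pb7 \<noteq> pb5"
  "pa0 \<noteq> pa4"
  "pa1 \<noteq> pa4"
  "pa2 \<noteq> pa4"
  "pa3 \<noteq> pa4"
  "pa5 \<noteq> pa4"
  "pa6 \<noteq> pa4"
  "pa7 \<noteq> pa4"
  "pb0 \<noteq> pa4"
  "pb1 \<noteq> pa4"
  "pb2 \<noteq> pa4"
  "pb3 \<noteq> pa4"
  "pb4 \<noteq> pa4"
  "pb5 \<noteq> pa4"
  "pb6 \<noteq> pa4"
  "pb7 \<noteq> pa4"
  "pa0 \<noteq> pb1"
  "pa1 \<noteq> pb1"
  "pa2 \<noteq> pb1"
  "pa3 \<noteq> pb1"
  "pa4 \<noteq> pb1"
  "pa5 \<noteq> pb1"
  "pa6 \<noteq> pb1"
  "pa7 \<noteq> pb1"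
  "pb0 \<noteq> pb1"
  "pb2 \<noteq> pb1"
  "pb3 \<noteq> pb1"
  "pb4 \<noteq> pb1"
  "pb5 \<noteq> pb1"
  "pb6 \<noteq> pb1"
  "pb7 \<noteq> pb1"
  by (simp_all add: pdefs)

definition solA :: "node list \<Rightarrow> real" where
  "solA P = (if P = pa0 \<or> P = pb5 then 1 else 0)"
definition solB :: "node list \<Rightarrow> real" where
  "solB P = (if P = pa4 \<or> P = pb1 then 1 else 0)"

lemma nc_helper: "path_solution f \<Longrightarrow> crosses P Q \<Longrightarrow> P \<noteq> Q \<Longrightarrow> f P = 0 \<or> f Q = 0"
  unfolding path_solution_def by (metis less_eq_real_def)

lemma edge_helper: "path_solution f \<Longrightarrow> e \<in> E \<Longrightarrow> sum f {P. H_path P \<and> e \<in> path_edges P} \<le> 1"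
  unfolding path_solution_def by blast

lemma solA_ok: "path_solution solA"
  unfolding path_solution_def
proof (intro conjI allI impI)
  show "\<forall>e\<in>E. sum solA {P. H_path P \<and> e \<in> path_edges P} \<le> 1"
    by (simp add: E_def esums solA_def neqs)
  show "1 \<le> sum solA {P. H_path P \<and> hd P = S1 \<and> last P = T1}"
    by (simp add: asum solA_def neqs)
  show "1 \<le> sum solA {P. H_path P \<and> hd P = S2 \<and> last P = T2}"
    by (simp add: bsum solA_def neqs)
  fix P show "0 \<le> solA P" by (simp add: solA_def)
  show "0 < solA P \<Longrightarrow> H_path P"
    by (auto simp: solA_def H_path_iff pathsA_def pathsB_def split: if_splits)
  fix Q show "0 < solA P \<and> 0 < solA Q \<and> P \<noteq> Q \<Longrightarrow> \<not> crosses P Q"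
    by (auto simp: solA_def split: if_splits intro!: disj_not_cross) (auto simp: pdefs)
qed

lemma solB_ok: "path_solution solB"
  unfolding path_solution_def
proof (intro conjI allI impI)
  show "\<forall>e\<in>E. sum solB {P. H_path P \<and> e \<in> path_edges P} \<le> 1"
    by (simp add: E_def esums solB_def neqs)
  show "1 \<le> sum solB {P. H_path P \<and> hd P = S1 \<and> last P = T1}"
    by (simp add: asum solB_def neqs)
  show "1 \<le> sum solB {P. H_path P \<and> hd P = S2 \<and> last P = T2}"
    by (simp add: bsum solB_def neqs)
  fix P show "0 \<le> solB P" by (simp add: solB_def)
  show "0 < solB P \<Longrightarrow> H_path P"
    by (auto simp: solB_def H_path_iff pathsA_def pathsB_def split: if_splits)
  fix Q show "0 < solB P \<and> 0 < solB Q \<and> P \<noteq> Q \<Longrightarrow> \<not> crosses P Q"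
    by (auto simp: solB_def split: if_splits intro!: disj_not_cross) (auto simp: pdefs)
qed

lemma sol_char:
  assumes ps: "path_solution f"
  shows "f = solA \<or> f = solB"
proof -
  have nn: "\<And>P. f P \<ge> 0" and supp: "\<And>P. f P > 0 \<Longrightarrow> H_path P"
    using ps unfolding path_solution_def by auto
  have dA: "f pa0 + f pa1 + f pa2 + f pa3 + f pa4 + f pa5 + f pa6 + f pa7 \<ge> 1" using ps unfolding path_solution_def by (simp add: asum)
  have dB: "f pb0 + f pb1 + f pb2 + f pb3 + f pb4 + f pb5 + f pb6 + f pb7 \<ge> 1" using ps unfolding path_solution_def by (simp add: bsum)
  have e_L1_L2: "f pa0 + f pa1 + f pa6 + f pa7 + f pb0 + f pb1 + f pb6 + f pb7 \<le> 1" using edge_helper[OF ps, of "{L1,L2}"] by (simp add: E_def esums)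
  have e_H1_H2: "f pa2 + f pa3 + f pa4 + f pa5 + f pb2 + f pb3 + f pb4 + f pb5 \<le> 1" using edge_helper[OF ps, of "{H1,H2}"] by (simp add: E_def esums)
  have e_L1_U1: "f pa0 + f pa1 + f pa2 + f pa3 + f pb2 + f pb3 + f pb6 + f pb7 \<le> 1" using edge_helper[OF ps, of "{L1,U1}"] by (simp add: E_def esums)
  have e_L1_U2: "f pa2 + f pa3 + f pa6 + f pa7 + f pb0 + f pb1 + f pb2 + f pb3 \<le> 1" using edge_helper[OF ps, of "{L1,U2}"] by (simp add: E_def esums)
  have e_H1_U1: "f pa4 + f pa5 + f pa6 + f pa7 + f pb2 + f pb3 + f pb6 + f pb7 \<le> 1" using edge_helper[OF ps, of "{H1,U1}"] by (simp add: E_def esums)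
  have e_H1_U2: "f pa2 + f pa3 + f pa6 + f pa7 + f pb4 + f pb5 + f pb6 + f pb7 \<le> 1" using edge_helper[OF ps, of "{H1,U2}"] by (simp add: E_def esums)
  have e_L2_V1: "f pa0 + f pa3 + f pa5 + f pa6 + f pb0 + f pb2 + f pb4 + f pb6 \<le> 1" using edge_helper[OF ps, of "{L2,V1}"] by (simp add: E_def esums)
  have e_L2_V2: "f pa1 + f pa3 + f pa5 + f pa7 + f pb1 + f pb2 + f pb4 + f pb7 \<le> 1" using edge_helper[OF ps, of "{L2,V2}"] by (simp add: E_def esums)
  have e_H2_V1: "f pa1 + f pa2 + f pa4 + f pa7 + f pb0 + f pb2 + f pb4 + f pb6 \<le> 1" using edge_helper[OF ps, of "{H2,V1}"] by (simp add: E_def esums)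
  have e_H2_V2: "f pa1 + f pa3 + f pa5 + f pa7 + f pb0 + f pb3 + f pb5 + f pb6 \<le> 1" using edge_helper[OF ps, of "{H2,V2}"] by (simp add: E_def esums)
  have c_X1_11: "f pa1 = 0 \<or> f pb3 = 0" by (rule nc_helper[OF ps cross_X1_11]) (simp add: pdefs)
  have c_X2_8: "f pa2 = 0 \<or> f pb0 = 0" by (rule nc_helper[OF ps cross_X2_8]) (simp add: pdefs)
  have c_X5_15: "f pa5 = 0 \<or> f pb7 = 0" by (rule nc_helper[OF ps cross_X5_15]) (simp add: pdefs)
  have c_X6_12: "f pa6 = 0 \<or> f pb4 = 0" by (rule nc_helper[OF ps cross_X6_12]) (simp add: pdefs)
  have c_X9_14: "f pb1 = 0 \<or> f pb6 = 0" by (rule nc_helper[OF ps cross_X9_14]) (simp add: pdefs)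
  have c_X10_13: "f pb2 = 0 \<or> f pb5 = 0" by (rule nc_helper[OF ps cross_X10_13]) (simp add: pdefs)
  have c_X0_12: "f pa0 = 0 \<or> f pb4 = 0" by (rule nc_helper[OF ps cross_X0_12]) (simp add: pdefs)
  have c_X2_9: "f pa2 = 0 \<or> f pb1 = 0" by (rule nc_helper[OF ps cross_X2_9]) (simp add: pdefs)
  have c_X4_8: "f pa4 = 0 \<or> f pb0 = 0" by (rule nc_helper[OF ps cross_X4_8]) (simp add: pdefs)
  have c_X6_13: "f pa6 = 0 \<or> f pb5 = 0" by (rule nc_helper[OF ps cross_X6_13]) (simp add: pdefs)
  have c_X0_9: "f pa0 = 0 \<or> f pb1 = 0" by (rule nc_helper[OF ps cross_X0_9]) (simp add: pdefs)
  have c_X4_13: "f pa4 = 0 \<or> f pb5 = 0" by (rule nc_helper[OF ps cross_X4_13]) (simp add: pdefs)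
  have vals: "(f pa0 = 1 \<and> f pa1 = 0 \<and> f pa2 = 0 \<and> f pa3 = 0 \<and> f pa4 = 0 \<and> f pa5 = 0 \<and> f pa6 = 0 \<and> f pa7 = 0 \<and> f pb0 = 0 \<and> f pb1 = 0 \<and> f pb2 = 0 \<and> f pb3 = 0 \<and> f pb4 = 0 \<and> f pb5 = 1 \<and> f pb6 = 0 \<and> f pb7 = 0) \<or> (f pa0 = 0 \<and> f pa1 = 0 \<and> f pa2 = 0 \<and> f pa3 = 0 \<and> f pa4 = 1 \<and> f pa5 = 0 \<and> f pa6 = 0 \<and> f pa7 = 0 \<and> f pb0 = 0 \<and> f pb1 = 1 \<and> f pb2 = 0 \<and> f pb3 = 0 \<and> f pb4 = 0 \<and> f pb5 = 0 \<and> f pb6 = 0 \<and> f pb7 = 0)"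
    by (rule LP[of "f pa0" "f pa1" "f pa2" "f pa3" "f pa4" "f pa5" "f pa6" "f pa7" "f pb0" "f pb1" "f pb2" "f pb3" "f pb4" "f pb5" "f pb6" "f pb7"]) (use nn dA dB e_L1_L2 e_H1_H2 e_L1_U1 e_L1_U2 e_H1_U1 e_H1_U2 e_L2_V1 e_L2_V2 e_H2_V1 e_H2_V2 c_X1_11 c_X2_8 c_X5_15 c_X6_12 c_X9_14 c_X10_13 c_X0_12 c_X2_9 c_X4_8 c_X6_13 c_X0_9 c_X4_13 in auto)
  have out: "f P = 0" if "P \<notin> set (pathsA @ pathsB)" for P
    using nn[of P] supp[of P] that H_path_iff by force
  show ?thesis
  proof (rule disjE[OF vals])
    assume v: "(f pa0 = 1 \<and> f pa1 = 0 \<and> f pa2 = 0 \<and> f pa3 = 0 \<and> f pa4 = 0 \<and> f pa5 = 0 \<and> f pa6 = 0 \<and> f pa7 = 0 \<and> f pb0 = 0 \<and> f pb1 = 0 \<and> f pb2 = 0 \<and> f pb3 = 0 \<and> f pb4 = 0 \<and> f pb5 = 1 \<and> f pb6 = 0 \<and> f pb7 = 0)"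
    show ?thesis
    proof (intro disjI1 ext)
      fix P show "f P = solA P"
      proof (cases "P \<in> set (pathsA @ pathsB)")
        case True then show ?thesis using v by (auto simp: pathsA_def pathsB_def solA_def neqs)
      next
        case False then show ?thesis using out[OF False] by (auto simp: pathsA_def pathsB_def solA_def)
      qed
    qed
  next
    assume v: "(f pa0 = 0 \<and> f pa1 = 0 \<and> f pa2 = 0 \<and> f pa3 = 0 \<and> f pa4 = 1 \<and> f pa5 = 0 \<and> f pa6 = 0 \<and> f pa7 = 0 \<and> f pb0 = 0 \<and> f pb1 = 1 \<and> f pb2 = 0 \<and> f pb3 = 0 \<and> f pb4 = 0 \<and> f pb5 = 0 \<and> f pb6 = 0 \<and> f pb7 = 0)"
    show ?thesis
    proof (intro disjI2 ext)
      fix P show "f P = solB P"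
      proof (cases "P \<in> set (pathsA @ pathsB)")
        case True then show ?thesis using v by (auto simp: pathsA_def pathsB_def solB_def neqs)
      next
        case False then show ?thesis using out[OF False] by (auto simp: pathsA_def pathsB_def solB_def)
      qed
    qed
  qed
qed

theorem lemmaB2:
  shows "card {f. path_solution f} = 2 \<and>
         (\<forall>f. path_solution f \<longrightarrow> (\<forall>P. f P \<in> \<int>))"
proof -
  have S: "{f. path_solution f} = {solA, solB}"
    using sol_char solA_ok solB_ok by blast
  have "solA pa0 \<noteq> solB pa0" by (simp add: solA_def solB_def neqs)
  then have "solA \<noteq> solB" by metis
  then have "card {f. path_solution f} = 2" using S by simp
  moreover have "\<forall>f. path_solution f \<longrightarrow> (\<forall>P. f P \<in> \<int>)"
  proof (intro allI impI)
    fix f P assume "path_solution f"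
    then have "f = solA \<or> f = solB" by (rule sol_char)
    then show "f P \<in> \<int>" by (auto simp: solA_def solB_def)
  qed
  ultimately show ?thesis by blast
qed

end
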